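(* Let $n\ge0$ and $i,j\in D$. Suppose that for $m=1,\dots,r$ we are given $a_m,b_m\in D$ with $a_m\neq b_m$, $a_m\Rightarrow_n b_m$ and $A_i(a_m)=1$, and that $A_i(c)\le A_j(c)$ for all $c\notin\{a_m: m=1,\dots,r\}$. Define $\hat A_i\in\{0,1\}^D$ by $\hat A_i(c)=A_i(c)$ if $c\notin\{a_m,b_m: m=1,\dots,r\}$, $\hat A_i(c)=0$ if $c=a_m$ for some $m$, and $\hat A_i(c)=1$ if $c=b_m$ for some $m$. If $\hat A_i\le A_j$ entrywise, then $i\Rightarrow_{n+1} j$.
   Context: Fix integers $k\ge1$, $d\ge1$, $K=\{1,\dots,k\}$, $D=\{1,\dots,d\}$. The $k$-tree is the set $K^*$ of finite words over $K$ with root the empty word $\epsilon$; $xg$ ($g\in K$) are the children of $x$. $L_n$ is the set of words of length exactly $n$ and $\Delta_n$ the set of words of length at most $n$. $A$ is a $d\times d$ matrix with entries in $\{0,1\}$, and $A_i(m)=A(i,m)$ denotes the entries of row $i$. A (valid) labeling of $\Delta_n$ is a map $\lambda:\Delta_n\to D$ with $A(\lambda(x),\lambda(xg))=1$ for all $x\in\Delta_{n-1}$, $g\in K$. For $p,q\in D$, $p\Rightarrow_n q$ means: for every valid labeling $\lambda$ of $\Delta_n$ with $\lambda(\epsilon)=p$ there is a valid labeling $\lambda'$ of $\Delta_n$ with $\lambda'(\epsilon)=q$ and $\lambda'|_{L_n}=\lambda|_{L_n}$. *)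

theory Defs
  imports Main
begin

text \<open>Words over K = {1..k} are lists of naturals with entries in {1..k};
  the children of x are x @ [g].  The 0/1 matrix A is encoded as a
  boolean function: A p q holds iff A(p,q) = 1.\<close>

definition Lwords :: "nat \<Rightarrow> nat \<Rightarrow> nat list set" where
  "Lwords k n = {x. length x = n \<and> set x \<subseteq> {1..k}}"

definition Delta :: "nat \<Rightarrow> nat \<Rightarrow> nat list set" where
  "Delta k n = {x. length x \<le> n \<and> set x \<subseteq> {1..k}}"

definition valid_labeling ::
  "nat \<Rightarrow> nat \<Rightarrow> (nat \<Rightarrow> nat \<Rightarrow> bool) \<Rightarrow> nat \<Rightarrow> (nat list \<Rightarrow> nat) \<Rightarrow> bool" where
  "valid_labeling k d A n lam \<longleftrightarrow>
     (\<forall>x\<in>Delta k n. lam x \<in> {1..d}) \<and>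
     (\<forall>x. length x < n \<and> set x \<subseteq> {1..k} \<longrightarrow>
          (\<forall>g\<in>{1..k}. A (lam x) (lam (x @ [g]))))"

definition implies_n ::
  "nat \<Rightarrow> nat \<Rightarrow> (nat \<Rightarrow> nat \<Rightarrow> bool) \<Rightarrow> nat \<Rightarrow> nat \<Rightarrow> nat \<Rightarrow> bool" where
  "implies_n k d A n p q \<longleftrightarrow>
     (\<forall>lam. valid_labeling k d A n lam \<and> lam [] = p \<longrightarrow>
        (\<exists>lam'. valid_labeling k d A n lam' \<and> lam' [] = q \<and>
                (\<forall>x\<in>Lwords k n. lam' x = lam x)))"

text \<open>The modified row \<open>\<hat>A_i\<close>; where c equals both some a_m and some b_m',
  the value 1 (b-case) takes precedence.\<close>
definition hatA ::
  "(nat \<Rightarrow> nat \<Rightarrow> bool) \<Rightarrow> nat \<Rightarrow> nat \<Rightarrow> (nat \<Rightarrow> nat) \<Rightarrow> (nat \<Rightarrow> nat) \<Rightarrow> nat \<Rightarrow> bool" where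
  "hatA A i r a b c =
     (if c \<in> b ` {1..r} then True
      else if c \<in> a ` {1..r} then False
      else A i c)"

end

theory Submission
  imports Defs
begin

lemma sub_valid:
  assumes "valid_labeling k d A (Suc n) lam" "g \<in> {1..k}"
  shows "valid_labeling k d A n (\<lambda>x. lam (g # x))"
proof -
  have "\<forall>x\<in>Delta k n. lam (g # x) \<in> {1..d}"
    using assms unfolding valid_labeling_def Delta_def by auto
  moreover have "\<forall>x. length x < n \<and> set x \<subseteq> {1..k} \<longrightarrow>
          (\<forall>h\<in>{1..k}. A (lam (g # x)) (lam (g # (x @ [h]))))"
  proof (intro allI impI ballI)
    fix x h assume "length x < n \<and> set x \<subseteq> {1..k}" "h \<in> {1..k}"
    then have "length (g # x) < Suc n \<and> set (g # x) \<subseteq> {1..k}" using assms(2) by auto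
    then show "A (lam (g # x)) (lam (g # (x @ [h])))"
      using assms(1) \<open>h \<in> {1..k}\<close> unfolding valid_labeling_def
      by (metis append_Cons)
  qed
  ultimately show ?thesis unfolding valid_labeling_def by simp
qed

theorem proposition3p6:
  fixes k d n r i j :: nat and A :: "nat \<Rightarrow> nat \<Rightarrow> bool" and a b :: "nat \<Rightarrow> nat"
  assumes "k \<ge> 1" and "d \<ge> 1"
    and "i \<in> {1..d}" and "j \<in> {1..d}"
    and "\<forall>m\<in>{1..r}. a m \<in> {1..d} \<and> b m \<in> {1..d}"
    and "\<forall>m\<in>{1..r}. a m \<noteq> b m"
    and "\<forall>m\<in>{1..r}. implies_n k d A n (a m) (b m)"
    and "\<forall>m\<in>{1..r}. A i (a m)"
    and "\<forall>c\<in>{1..d}. c \<notin> a ` {1..r} \<longrightarrow> A i c \<le> A j c"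
    and "\<forall>c\<in>{1..d}. hatA A i r a b c \<le> A j c"
  shows "implies_n k d A (Suc n) i j"
  unfolding implies_n_def
proof (intro allI impI)
  fix lam assume H: "valid_labeling k d A (Suc n) lam \<and> lam [] = i"
  have ex: "\<forall>g\<in>{1..k}. \<exists>f. valid_labeling k d A n f \<and> f [] \<in> {1..d} \<and> A j (f [])
      \<and> (\<forall>x\<in>Lwords k n. f x = lam (g # x))"
  proof
    fix g assume g: "g \<in> {1..k}"
    have sv: "valid_labeling k d A n (\<lambda>x. lam (g # x))" using sub_valid H g by blast
    have cin: "lam [g] \<in> {1..d}" using H g unfolding valid_labeling_def Delta_def by auto
    have Ai: "A i (lam [g])"
    proof -
      have "A (lam []) (lam ([] @ [g]))" using H g unfolding valid_labeling_def
        by (metis (no_types, lifting) empty_subsetI list.size(3) set_empty zero_less_Suc)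
      then show ?thesis using H by simp
    qed
    show "\<exists>f. valid_labeling k d A n f \<and> f [] \<in> {1..d} \<and> A j (f [])
      \<and> (\<forall>x\<in>Lwords k n. f x = lam (g # x))"
    proof (cases "lam [g] \<in> a ` {1..r}")
      case True
      then obtain m where m: "m \<in> {1..r}" "lam [g] = a m" by auto
      then obtain f where f: "valid_labeling k d A n f" "f [] = b m"
        "\<forall>x\<in>Lwords k n. f x = lam (g # x)"
        using assms(7) sv unfolding implies_n_def by force
      have "b m \<in> {1..d}" using assms(5) m by auto
      moreover have "hatA A i r a b (b m)" unfolding hatA_def using m by auto
      ultimately have "A j (b m)" using assms(10) by force
      then show ?thesis using f \<open>b m \<in> {1..d}\<close> by auto
    next
      case False
      then have "A j (lam [g])" using assms(9) cin Ai by force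
      then show ?thesis using sv cin by (intro exI[of _ "\<lambda>x. lam (g # x)"]) auto
    qed
  qed
  then obtain F where F: "\<forall>g\<in>{1..k}. valid_labeling k d A n (F g) \<and> F g [] \<in> {1..d}
      \<and> A j (F g []) \<and> (\<forall>x\<in>Lwords k n. F g x = lam (g # x))"
    by metis
  define L where "L = (\<lambda>x. case x of [] \<Rightarrow> j | g # y \<Rightarrow> F g y)"
  have v1: "\<forall>x\<in>Delta k (Suc n). L x \<in> {1..d}"
  proof
    fix x assume x: "x \<in> Delta k (Suc n)"
    show "L x \<in> {1..d}"
    proof (cases x)
      case Nil then show ?thesis using assms(4) by (simp add: L_def)
    next
      case (Cons g y)
      then have "g \<in> {1..k}" "y \<in> Delta k n" using x by (auto simp: Delta_def)
      then show ?thesis using F Cons unfolding L_def valid_labeling_def by auto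
    qed
  qed
  have v2: "\<forall>x. length x < Suc n \<and> set x \<subseteq> {1..k} \<longrightarrow>
          (\<forall>h\<in>{1..k}. A (L x) (L (x @ [h])))"
  proof (intro allI impI ballI)
    fix x h assume x: "length x < Suc n \<and> set x \<subseteq> {1..k}" and h: "h \<in> {1..k}"
    show "A (L x) (L (x @ [h]))"
    proof (cases x)
      case Nil then show ?thesis using F h by (simp add: L_def)
    next
      case (Cons g y)
      then have "g \<in> {1..k}" "length y < n" "set y \<subseteq> {1..k}" using x by auto
      then show ?thesis using F Cons h unfolding L_def valid_labeling_def by auto
    qed
  qed
  have v3: "\<forall>x\<in>Lwords k (Suc n). L x = lam x"
  proof
    fix x assume x: "x \<in> Lwords k (Suc n)"
    then obtain g y where xy: "x = g # y" by (cases x) (auto simp: Lwords_def)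
    then have "g \<in> {1..k}" "y \<in> Lwords k n" using x by (auto simp: Lwords_def)
    then show "L x = lam x" using F xy by (auto simp: L_def)
  qed
  show "\<exists>lam'. valid_labeling k d A (Suc n) lam' \<and> lam' [] = j \<and>
                (\<forall>x\<in>Lwords k (Suc n). lam' x = lam x)"
    using v1 v2 v3 by (intro exI[of _ L]) (simp add: valid_labeling_def L_def)
qed

end
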